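(* (1) For every $n\ge1$, $(\mathcal{Q}_n,\le)$ is a lattice. (2) For every $n\ge3$, $(\mathcal{P}_n,\le)$ is not a lattice. (3) For every $n\ge4$, $\mathcal{Q}_n\setminus\mathcal{P}_n$ with the induced order is not a lattice.
   Context: Fix $n\ge1$, $L_n=\{0,1,\dots,n\}$. A discrete quasi-copula is a map $Q:L_n\times L_n\to[0,n]$ such that (Q1) $Q(i,0)=Q(0,i)=0$ and $Q(i,n)=Q(n,i)=i$ for all $i\in L_n$; (Q2) $Q$ is non-decreasing in each argument; (Q3) $Q(i,j)+Q(i',j')\ge Q(i,j')+Q(i',j)$ for all $i\le i'$, $j\le j'$ in $L_n$ such that at least one of $i,i',j,j'$ is $0$ or $n$. A discrete copula is a map satisfying (Q1) and the 2-increasing inequality $Q(i,j)+Q(i',j')\ge Q(i,j')+Q(i',j)$ for all $i\le i'$, $j\le j'$ in $L_n$. Such a map is irreducible if its range is exactly $L_n$. $\mathcal{Q}_n$ (resp. $\mathcal{P}_n$) is the set of irreducible discrete quasi-copulas (resp. copulas) on $L_n$, ordered by the concordance order $P\le Q$ iff $P(i,j)\le Q(i,j)$ for all $i,j\in L_n$; $\mathcal{P}_n\subseteq\mathcal{Q}_n$ and subsets carry the induced order. *)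

theory Defs
  imports Complex_Main
begin

text \<open>Maps L_n x L_n -> real are represented as functions nat => nat => real,
  normalised to be 0 outside L_n x L_n (so that each map has a unique representative).\<close>

definition on_grid :: "nat \<Rightarrow> (nat \<Rightarrow> nat \<Rightarrow> real) \<Rightarrow> bool" where
  "on_grid n Q \<longleftrightarrow> (\<forall>i j. (n < i \<or> n < j) \<longrightarrow> Q i j = 0)
      \<and> (\<forall>i\<le>n. \<forall>j\<le>n. 0 \<le> Q i j \<and> Q i j \<le> real n)"

definition boundary_cond :: "nat \<Rightarrow> (nat \<Rightarrow> nat \<Rightarrow> real) \<Rightarrow> bool" where
  "boundary_cond n Q \<longleftrightarrow> (\<forall>i\<le>n. Q i 0 = 0 \<and> Q 0 i = 0 \<and> Q i n = real i \<and> Q n i = real i)"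

definition nondecr :: "nat \<Rightarrow> (nat \<Rightarrow> nat \<Rightarrow> real) \<Rightarrow> bool" where
  "nondecr n Q \<longleftrightarrow> (\<forall>i i' j. i \<le> i' \<and> i' \<le> n \<and> j \<le> n \<longrightarrow> Q i j \<le> Q i' j)
      \<and> (\<forall>i j j'. i \<le> n \<and> j \<le> j' \<and> j' \<le> n \<longrightarrow> Q i j \<le> Q i j')"

definition rect_ineq :: "(nat \<Rightarrow> nat \<Rightarrow> real) \<Rightarrow> nat \<Rightarrow> nat \<Rightarrow> nat \<Rightarrow> nat \<Rightarrow> bool" where
  "rect_ineq Q i i' j j' \<longleftrightarrow> Q i j + Q i' j' \<ge> Q i j' + Q i' j"

definition discrete_quasi_copula :: "nat \<Rightarrow> (nat \<Rightarrow> nat \<Rightarrow> real) \<Rightarrow> bool" where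
  "discrete_quasi_copula n Q \<longleftrightarrow> on_grid n Q \<and> boundary_cond n Q \<and> nondecr n Q \<and>
     (\<forall>i i' j j'. i \<le> i' \<and> i' \<le> n \<and> j \<le> j' \<and> j' \<le> n \<and>
        (i \<in> {0, n} \<or> i' \<in> {0, n} \<or> j \<in> {0, n} \<or> j' \<in> {0, n})
        \<longrightarrow> rect_ineq Q i i' j j')"

definition discrete_copula :: "nat \<Rightarrow> (nat \<Rightarrow> nat \<Rightarrow> real) \<Rightarrow> bool" where
  "discrete_copula n Q \<longleftrightarrow> on_grid n Q \<and> boundary_cond n Q \<and>
     (\<forall>i i' j j'. i \<le> i' \<and> i' \<le> n \<and> j \<le> j' \<and> j' \<le> n \<longrightarrow> rect_ineq Q i i' j j')"

definition irreducible :: "nat \<Rightarrow> (nat \<Rightarrow> nat \<Rightarrow> real) \<Rightarrow> bool" where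
  "irreducible n Q \<longleftrightarrow> (\<lambda>(i, j). Q i j) ` ({0..n} \<times> {0..n}) = real ` {0..n}"

definition QQ :: "nat \<Rightarrow> (nat \<Rightarrow> nat \<Rightarrow> real) set" where
  "QQ n = {Q. discrete_quasi_copula n Q \<and> irreducible n Q}"

definition PP :: "nat \<Rightarrow> (nat \<Rightarrow> nat \<Rightarrow> real) set" where
  "PP n = {Q. discrete_copula n Q \<and> irreducible n Q}"

definition conc_le :: "nat \<Rightarrow> (nat \<Rightarrow> nat \<Rightarrow> real) \<Rightarrow> (nat \<Rightarrow> nat \<Rightarrow> real) \<Rightarrow> bool" where
  "conc_le n P Q \<longleftrightarrow> (\<forall>i\<le>n. \<forall>j\<le>n. P i j \<le> Q i j)"

definition is_lub_in :: "'a set \<Rightarrow> ('a \<Rightarrow> 'a \<Rightarrow> bool) \<Rightarrow> 'a \<Rightarrow> 'a \<Rightarrow> 'a \<Rightarrow> bool" where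
  "is_lub_in S le x y z \<longleftrightarrow> z \<in> S \<and> le x z \<and> le y z \<and>
     (\<forall>w\<in>S. le x w \<and> le y w \<longrightarrow> le z w)"

definition is_glb_in :: "'a set \<Rightarrow> ('a \<Rightarrow> 'a \<Rightarrow> bool) \<Rightarrow> 'a \<Rightarrow> 'a \<Rightarrow> 'a \<Rightarrow> bool" where
  "is_glb_in S le x y z \<longleftrightarrow> z \<in> S \<and> le z x \<and> le z y \<and>
     (\<forall>w\<in>S. le w x \<and> le w y \<longrightarrow> le w z)"

definition lattice_on :: "'a set \<Rightarrow> ('a \<Rightarrow> 'a \<Rightarrow> bool) \<Rightarrow> bool" where
  "lattice_on S le \<longleftrightarrow> (\<forall>x\<in>S. \<forall>y\<in>S. (\<exists>z. is_lub_in S le x y z) \<and> (\<exists>z. is_glb_in S le x y z))"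

end

theory Submission
  imports Defs
begin


lemma strip:
  fixes Q :: "nat \<Rightarrow> nat \<Rightarrow> real"
  assumes loc: "\<forall>i<n. \<forall>j<n. Q i j + Q (Suc i) (Suc j) \<ge> Q i (Suc j) + Q (Suc i) j"
    and i: "i < n" and jj: "j \<le> j'" "j' \<le> n"
  shows "Q i j + Q (Suc i) j' \<ge> Q i j' + Q (Suc i) j"
  using jj
proof (induction j' rule: dec_induct)
  case base then show ?case by simp
next
  case (step k)
  then have "Q i k + Q (Suc i) (Suc k) \<ge> Q i (Suc k) + Q (Suc i) k" using loc i by auto
  with step show ?case by linarith
qed

lemma local_to_rect:
  fixes Q :: "nat \<Rightarrow> nat \<Rightarrow> real"
  assumes loc: "\<forall>i<n. \<forall>j<n. Q i j + Q (Suc i) (Suc j) \<ge> Q i (Suc j) + Q (Suc i) j"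
    and ii: "i \<le> i'" "i' \<le> n" and jj: "j \<le> j'" "j' \<le> n"
  shows "rect_ineq Q i i' j j'"
  using ii
proof (induction i' rule: dec_induct)
  case base then show ?case by (simp add: rect_ineq_def)
next
  case (step k)
  then have "Q k j + Q (Suc k) j' \<ge> Q k j' + Q (Suc k) j" using strip[OF loc _ jj] by auto
  with step show ?case by (simp add: rect_ineq_def)
qed

lemma glob_mono:
  fixes f :: "nat \<Rightarrow> real"
  assumes "\<forall>i<n. f i \<le> f (Suc i) \<and> f (Suc i) \<le> f i + 1" "i \<le> i'" "i' \<le> n"
  shows "f i \<le> f i' \<and> f i' \<le> f i + real (i' - i)"
  using assms(2,3)
proof (induction i' rule: dec_induct)
  case base then show ?case by simp
next
  case (step k)
  then have "f k \<le> f (Suc k) \<and> f (Suc k) \<le> f k + 1" using assms(1) by auto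
  with step show ?case by (auto simp: of_nat_diff)
qed

lemma quasi_from_steps:
  fixes Q :: "nat \<Rightarrow> nat \<Rightarrow> real"
  assumes og: "on_grid n Q" and bc: "boundary_cond n Q"
    and rs: "\<forall>i<n. \<forall>j\<le>n. Q i j \<le> Q (Suc i) j \<and> Q (Suc i) j \<le> Q i j + 1"
    and cs: "\<forall>i\<le>n. \<forall>j<n. Q i j \<le> Q i (Suc j) \<and> Q i (Suc j) \<le> Q i j + 1"
  shows "discrete_quasi_copula n Q"
proof -
  have R: "Q i j \<le> Q i' j \<and> Q i' j \<le> Q i j + real (i' - i)" if "i \<le> i'" "i' \<le> n" "j \<le> n" for i i' j
    using glob_mono[of n "\<lambda>i. Q i j"] rs that by auto
  have C: "Q i j \<le> Q i j' \<and> Q i j' \<le> Q i j + real (j' - j)" if "j \<le> j'" "j' \<le> n" "i \<le> n" for i j j'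
    using glob_mono[of n "\<lambda>j. Q i j"] cs that by auto
  have nd: "nondecr n Q" unfolding nondecr_def using R C by auto
  have "rect_ineq Q i i' j j'" if h: "i \<le> i'" "i' \<le> n" "j \<le> j'" "j' \<le> n"
     "i \<in> {0, n} \<or> i' \<in> {0, n} \<or> j \<in> {0, n} \<or> j' \<in> {0, n}" for i i' j j'
  proof -
    have b: "Q x 0 = 0" "Q 0 x = 0" "Q x n = real x" "Q n x = real x" if "x \<le> n" for x
      using bc that unfolding boundary_cond_def by auto
    from h(5) consider "i = 0" | "i = n" | "i' = 0" | "i' = n" | "j = 0" | "j = n" | "j' = 0" | "j' = n" by auto
    then show ?thesis
    proof cases
      case 1 then show ?thesis using b C[of j j' i'] h by (simp add: rect_ineq_def)
    next
      case 2 then have "i' = i" using h by auto then show ?thesis by (simp add: rect_ineq_def)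
    next
      case 3 then have "i = 0" "i' = 0" using h by auto then show ?thesis by (simp add: rect_ineq_def)
    next
      case 4 then show ?thesis using b[of j] b[of j'] C[of j j' i] h by (simp add: rect_ineq_def of_nat_diff)
    next
      case 5 then show ?thesis using b R[of i i' j'] h by (simp add: rect_ineq_def)
    next
      case 6 then have "j' = j" using h by auto then show ?thesis by (simp add: rect_ineq_def)
    next
      case 7 then have "j = 0" "j' = 0" using h by auto then show ?thesis by (simp add: rect_ineq_def)
    next
      case 8 then show ?thesis using b[of i] b[of i'] R[of i i' j] h by (simp add: rect_ineq_def of_nat_diff)
    qed
  qed
  then show ?thesis using og bc nd unfolding discrete_quasi_copula_def by blast
qed




lemma irr_vals: "irreducible n Q \<Longrightarrow> i \<le> n \<Longrightarrow> j \<le> n \<Longrightarrow> Q i j \<in> real ` {0..n}"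
proof -
  assume a: "irreducible n Q" "i \<le> n" "j \<le> n"
  then have "(i, j) \<in> {0..n} \<times> {0..n}" by auto
  then have "(\<lambda>(i, j). Q i j) (i, j) \<in> (\<lambda>(i, j). Q i j) ` ({0..n} \<times> {0..n})" by (rule imageI)
  then show ?thesis using a(1) unfolding irreducible_def by simp
qed

lemma comb_QQ:
  fixes h :: "real \<Rightarrow> real \<Rightarrow> real"
  assumes hsel: "\<And>a b. h a b = a \<or> h a b = b"
    and hmono: "\<And>a b c d. a \<le> c \<Longrightarrow> b \<le> d \<Longrightarrow> h a b \<le> h c d"
    and hshift: "\<And>a b c. h (a + c) (b + c) = h a b + c"
    and P: "P \<in> QQ n" and Q: "Q \<in> QQ n"
  shows "(\<lambda>i j. h (P i j) (Q i j)) \<in> QQ n"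
proof -
  define Z where "Z = (\<lambda>i j. h (P i j) (Q i j))"
  have hid: "h a a = a" for a using hsel by metis
  have hle: "min a b \<le> h a b" "h a b \<le> max a b" for a b using hsel[of a b] by auto
  from P Q have dP: "discrete_quasi_copula n P" "irreducible n P"
    and dQ: "discrete_quasi_copula n Q" "irreducible n Q" by (auto simp: QQ_def)
  have ogP: "on_grid n P" and bP: "boundary_cond n P" and nP: "nondecr n P"
    and rP: "\<forall>i i' j j'. i \<le> i' \<and> i' \<le> n \<and> j \<le> j' \<and> j' \<le> n \<and>
        (i \<in> {0, n} \<or> i' \<in> {0, n} \<or> j \<in> {0, n} \<or> j' \<in> {0, n}) \<longrightarrow> rect_ineq P i i' j j'"
    using dP(1) unfolding discrete_quasi_copula_def by auto
  have ogQ: "on_grid n Q" and bQ: "boundary_cond n Q" and nQ: "nondecr n Q"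
    and rQ: "\<forall>i i' j j'. i \<le> i' \<and> i' \<le> n \<and> j \<le> j' \<and> j' \<le> n \<and>
        (i \<in> {0, n} \<or> i' \<in> {0, n} \<or> j \<in> {0, n} \<or> j' \<in> {0, n}) \<longrightarrow> rect_ineq Q i i' j j'"
    using dQ(1) unfolding discrete_quasi_copula_def by auto
  have og1: "Z i j = 0" if "n < i \<or> n < j" for i j
  proof -
    have "P i j = 0" "Q i j = 0" using ogP ogQ that unfolding on_grid_def by auto
    then show "Z i j = 0" using hid unfolding Z_def by simp
  qed
  have og2: "0 \<le> Z i j \<and> Z i j \<le> real n" if "i \<le> n" "j \<le> n" for i j
  proof -
    have "0 \<le> P i j" "P i j \<le> real n" "0 \<le> Q i j" "Q i j \<le> real n"
      using ogP ogQ that unfolding on_grid_def by auto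
    then show ?thesis using hsel[of "P i j" "Q i j"] unfolding Z_def by auto
  qed
  have og: "on_grid n Z" unfolding on_grid_def using og1 og2 by blast
  have bc: "boundary_cond n Z" using bP bQ hid unfolding boundary_cond_def Z_def by auto
  have nd: "nondecr n Z" using nP nQ hmono unfolding nondecr_def Z_def by auto
  have rect: "rect_ineq Z i i' j j'" if h: "i \<le> i'" "i' \<le> n" "j \<le> j'" "j' \<le> n"
     "i \<in> {0, n} \<or> i' \<in> {0, n} \<or> j \<in> {0, n} \<or> j' \<in> {0, n}" for i i' j j'
  proof -
    have p: "P i j + P i' j' \<ge> P i j' + P i' j" and q: "Q i j + Q i' j' \<ge> Q i j' + Q i' j"
      using rP rQ h unfolding rect_ineq_def by blast+
    have b: "P x 0 = 0" "P 0 x = 0" "P x n = real x" "P n x = real x"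
            "Q x 0 = 0" "Q 0 x = 0" "Q x n = real x" "Q n x = real x" if "x \<le> n" for x
      using bP bQ that unfolding boundary_cond_def by auto
    from h(5) consider "i = 0" | "i = n" | "i' = 0" | "i' = n" | "j = 0" | "j = n" | "j' = 0" | "j' = n" by auto
    then show ?thesis
    proof cases
      case 1
      then have "P i' j \<le> P i' j'" "Q i' j \<le> Q i' j'" using p q b h by auto
      then have "h (P i' j) (Q i' j) \<le> h (P i' j') (Q i' j')" by (rule hmono)
      then show ?thesis using 1 b h hid unfolding rect_ineq_def Z_def by simp
    next
      case 2 then have "i' = i" using h by auto then show ?thesis by (simp add: rect_ineq_def)
    next
      case 3 then have "i = 0" "i' = 0" using h by auto then show ?thesis by (simp add: rect_ineq_def)
    next
      case 4
      define c where "c = real j' - real j"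
      have "P i j' \<le> P i j + c" "Q i j' \<le> Q i j + c" using p q b[of j] b[of j'] h 4 c_def by auto
      then have "h (P i j') (Q i j') \<le> h (P i j + c) (Q i j + c)" by (rule hmono)
      then have "h (P i j') (Q i j') \<le> h (P i j) (Q i j) + c" by (simp add: hshift)
      then show ?thesis using 4 b[of j] b[of j'] h hid unfolding rect_ineq_def Z_def c_def by simp
    next
      case 5
      then have "P i j' \<le> P i' j'" "Q i j' \<le> Q i' j'" using p q b h by auto
      then have "h (P i j') (Q i j') \<le> h (P i' j') (Q i' j')" by (rule hmono)
      then show ?thesis using 5 b h hid unfolding rect_ineq_def Z_def by simp
    next
      case 6 then have "j' = j" using h by auto then show ?thesis by (simp add: rect_ineq_def)
    next
      case 7 then have "j = 0" "j' = 0" using h by auto then show ?thesis by (simp add: rect_ineq_def)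
    next
      case 8
      define c where "c = real i' - real i"
      have "P i' j \<le> P i j + c" "Q i' j \<le> Q i j + c" using p q b[of i] b[of i'] h 8 c_def by auto
      then have "h (P i' j) (Q i' j) \<le> h (P i j + c) (Q i j + c)" by (rule hmono)
      then have "h (P i' j) (Q i' j) \<le> h (P i j) (Q i j) + c" by (simp add: hshift)
      then show ?thesis using 8 b[of i] b[of i'] h hid unfolding rect_ineq_def Z_def c_def by simp
    qed
  qed
  have irr: "irreducible n Z"
  proof -
    have "(\<lambda>(i, j). Z i j) ` ({0..n} \<times> {0..n}) \<subseteq> real ` {0..n}"
    proof
      fix v assume "v \<in> (\<lambda>(i, j). Z i j) ` ({0..n} \<times> {0..n})"
      then obtain i j where ij: "i \<le> n" "j \<le> n" "v = Z i j" by auto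
      then show "v \<in> real ` {0..n}" using irr_vals[OF dP(2) ij(1,2)] irr_vals[OF dQ(2) ij(1,2)] hsel[of "P i j" "Q i j"]
        unfolding Z_def by auto
    qed
    moreover have "real ` {0..n} \<subseteq> (\<lambda>(i, j). Z i j) ` ({0..n} \<times> {0..n})"
    proof
      fix v assume "v \<in> real ` {0..n}"
      then obtain k where k: "k \<le> n" "v = real k" by auto
      then have "Z k n = v" using bP bQ hid unfolding boundary_cond_def Z_def by auto
      moreover have "(k, n) \<in> {0..n} \<times> {0..n}" using k by auto
      ultimately show "v \<in> (\<lambda>(i, j). Z i j) ` ({0..n} \<times> {0..n})"
        by (metis (no_types, lifting) case_prod_conv image_eqI)
    qed
    ultimately show ?thesis unfolding irreducible_def by blast
  qed
  show ?thesis unfolding QQ_def discrete_quasi_copula_def Z_def[symmetric]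
    using og bc nd rect irr by blast
qed

lemma part1: "lattice_on (QQ n) (conc_le n)"
  unfolding lattice_on_def
proof (intro ballI conjI)
  fix x y assume x: "x \<in> QQ n" and y: "y \<in> QQ n"
  have "(\<lambda>i j. max (x i j) (y i j)) \<in> QQ n"
    by (rule comb_QQ[OF _ _ _ x y]) (auto simp: max_def)
  then show "\<exists>z. is_lub_in (QQ n) (conc_le n) x y z"
    unfolding is_lub_in_def conc_le_def by (intro exI[of _ "\<lambda>i j. max (x i j) (y i j)"]) auto
  have "(\<lambda>i j. min (x i j) (y i j)) \<in> QQ n"
    by (rule comb_QQ[OF _ _ _ x y]) (auto simp: min_def)
  then show "\<exists>z. is_glb_in (QQ n) (conc_le n) x y z"
    unfolding is_glb_in_def conc_le_def by (intro exI[of _ "\<lambda>i j. min (x i j) (y i j)"]) auto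
qed




definition dof :: "nat list list \<Rightarrow> nat \<Rightarrow> nat \<Rightarrow> nat" where
  "dof t i j = (if 1 \<le> i \<and> i \<le> length t \<and> 1 \<le> j \<and> j \<le> length t then t!(i-1)!(j-1) else 0)"

definition mk :: "nat \<Rightarrow> nat list list \<Rightarrow> nat \<Rightarrow> nat \<Rightarrow> real" where
  "mk n t i j = (if i \<le> n \<and> j \<le> n then real (min i j) - real (dof t i j) else 0)"

lemma dof_zero: "i = 0 \<or> j = 0 \<or> length t < i \<or> length t < j \<Longrightarrow> dof t i j = 0"
  unfolding dof_def by auto

lemma minloc: "real (min i j) + real (min (Suc i) (Suc j)) =
   real (min i (Suc j)) + real (min (Suc i) j) + (if i = j then 1 else 0)"
  by (cases "i < j"; cases "i = j") (auto simp: min_def)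

lemma minrow: "real (min (Suc i) j) = real (min i j) + (if i < j then 1 else 0)"
  by (auto simp: min_def)

lemma mincol: "real (min i (Suc j)) = real (min i j) + (if j < i then 1 else 0)"
  by (auto simp: min_def)

definition dle :: "nat list list \<Rightarrow> bool" where
  "dle t \<longleftrightarrow> (\<forall>i\<le>length t. \<forall>j\<le>length t. dof t i j \<le> min i j)"

definition dloc :: "nat list list \<Rightarrow> bool" where
  "dloc t \<longleftrightarrow> (\<forall>i\<le>length t. \<forall>j\<le>length t. real (dof t i j) + real (dof t (Suc i) (Suc j))
      \<le> real (dof t i (Suc j)) + real (dof t (Suc i) j) + (if i = j then 1 else 0))"

definition dstep :: "nat list list \<Rightarrow> bool" where
  "dstep t \<longleftrightarrow> (\<forall>i\<le>length t. \<forall>j\<le>length t.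
      real (dof t (Suc i) j) \<le> real (dof t i j) + (if i < j then 1 else 0) \<and>
      real (dof t i j) + (if i < j then 1 else 0) \<le> real (dof t (Suc i) j) + 1 \<and>
      real (dof t i (Suc j)) \<le> real (dof t i j) + (if j < i then 1 else 0) \<and>
      real (dof t i j) + (if j < i then 1 else 0) \<le> real (dof t i (Suc j)) + 1)"

lemma dle_all: "dle t \<Longrightarrow> dof t i j \<le> min i j"
  unfolding dle_def using dof_zero[of i j t] by (cases "i \<le> length t \<and> j \<le> length t") auto

lemma mk_grid:
  assumes "length t < n" "dle t"
  shows "on_grid n (mk n t)" "boundary_cond n (mk n t)" "irreducible n (mk n t)"
proof -
  have "0 \<le> mk n t i j \<and> mk n t i j \<le> real n" if "i \<le> n" "j \<le> n" for i j
  proof -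
    have "dof t i j \<le> min i j" by (rule dle_all[OF assms(2)])
    then have "real (dof t i j) \<le> real (min i j)" "real (min i j) \<le> real n" using that by auto
    then show ?thesis using that unfolding mk_def by simp
  qed
  then show "on_grid n (mk n t)" unfolding on_grid_def mk_def by auto
  show "boundary_cond n (mk n t)" unfolding boundary_cond_def mk_def using assms(1) dof_zero
    by (auto simp: min_def)
  have "(\<lambda>(i, j). mk n t i j) ` ({0..n} \<times> {0..n}) \<subseteq> real ` {0..n}"
  proof
    fix v assume "v \<in> (\<lambda>(i, j). mk n t i j) ` ({0..n} \<times> {0..n})"
    then obtain i j where ij: "i \<le> n" "j \<le> n" "v = mk n t i j" by auto
    have "dof t i j \<le> min i j" by (rule dle_all[OF assms(2)])
    then have "v = real (min i j - dof t i j)" using ij unfolding mk_def by (simp add: of_nat_diff)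
    moreover have "min i j - dof t i j \<in> {0..n}" using ij by auto
    ultimately show "v \<in> real ` {0..n}" by blast
  qed
  moreover have "real ` {0..n} \<subseteq> (\<lambda>(i, j). mk n t i j) ` ({0..n} \<times> {0..n})"
  proof
    fix v assume "v \<in> real ` {0..n}"
    then obtain k where k: "k \<le> n" "v = real k" by auto
    then have "mk n t k n = v" using assms(1) dof_zero[of k n t] unfolding mk_def by (auto simp: min_def)
    moreover have "(k, n) \<in> {0..n} \<times> {0..n}" using k by auto
    ultimately show "v \<in> (\<lambda>(i, j). mk n t i j) ` ({0..n} \<times> {0..n})"
      by (metis (no_types, lifting) case_prod_conv image_eqI)
  qed
  ultimately show "irreducible n (mk n t)" unfolding irreducible_def by blast
qed

lemma mk_PP:
  assumes "length t < n" "dle t" "dloc t"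
  shows "mk n t \<in> PP n"
proof -
  have loc: "\<forall>i<n. \<forall>j<n. mk n t i j + mk n t (Suc i) (Suc j) \<ge> mk n t i (Suc j) + mk n t (Suc i) j"
  proof (intro allI impI)
    fix i j assume ij: "i < n" "j < n"
    have "real (dof t i j) + real (dof t (Suc i) (Suc j))
      \<le> real (dof t i (Suc j)) + real (dof t (Suc i) j) + (if i = j then 1 else 0)"
    proof (cases "i \<le> length t \<and> j \<le> length t")
      case True then show ?thesis using assms(3) unfolding dloc_def by blast
    next
      case False then show ?thesis using dof_zero[of _ _ t] by auto
    qed
    moreover have "mk n t i j + mk n t (Suc i) (Suc j) - mk n t i (Suc j) - mk n t (Suc i) j
       = (if i = j then 1 else 0) - (real (dof t i j) + real (dof t (Suc i) (Suc j))
          - real (dof t i (Suc j)) - real (dof t (Suc i) j))"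
      using ij minloc[of i j] unfolding mk_def by simp
    ultimately show "mk n t i j + mk n t (Suc i) (Suc j) \<ge> mk n t i (Suc j) + mk n t (Suc i) j"
      by linarith
  qed
  show ?thesis unfolding PP_def discrete_copula_def using mk_grid[OF assms(1,2)] local_to_rect[OF loc] by blast
qed

lemma mk_QQ:
  assumes "length t < n" "dle t" "dstep t"
  shows "mk n t \<in> QQ n"
proof -
  have D: "real (dof t (Suc i) j) \<le> real (dof t i j) + (if i < j then 1 else 0) \<and>
      real (dof t i j) + (if i < j then 1 else 0) \<le> real (dof t (Suc i) j) + 1 \<and>
      real (dof t i (Suc j)) \<le> real (dof t i j) + (if j < i then 1 else 0) \<and>
      real (dof t i j) + (if j < i then 1 else 0) \<le> real (dof t i (Suc j)) + 1" for i j
  proof (cases "i \<le> length t \<and> j \<le> length t")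
    case True then show ?thesis using assms(3) unfolding dstep_def by blast
  next
    case False then show ?thesis using dof_zero[of _ _ t] by auto
  qed
  have rs: "\<forall>i<n. \<forall>j\<le>n. mk n t i j \<le> mk n t (Suc i) j \<and> mk n t (Suc i) j \<le> mk n t i j + 1"
  proof (intro allI impI)
    fix i j assume ij: "i < n" "j \<le> n"
    have e: "mk n t (Suc i) j = real (min i j) + (if i < j then 1 else 0) - real (dof t (Suc i) j)"
      "mk n t i j = real (min i j) - real (dof t i j)" using ij minrow[of i j] unfolding mk_def by auto
    show "mk n t i j \<le> mk n t (Suc i) j \<and> mk n t (Suc i) j \<le> mk n t i j + 1"
      unfolding e using D[of i j] by linarith
  qed
  have cs: "\<forall>i\<le>n. \<forall>j<n. mk n t i j \<le> mk n t i (Suc j) \<and> mk n t i (Suc j) \<le> mk n t i j + 1"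
  proof (intro allI impI)
    fix i j assume ij: "i \<le> n" "j < n"
    have e: "mk n t i (Suc j) = real (min i j) + (if j < i then 1 else 0) - real (dof t i (Suc j))"
      "mk n t i j = real (min i j) - real (dof t i j)" using ij mincol[of i j] unfolding mk_def by auto
    show "mk n t i j \<le> mk n t i (Suc j) \<and> mk n t i (Suc j) \<le> mk n t i j + 1"
      unfolding e using D[of i j] by linarith
  qed
  show ?thesis unfolding QQ_def using quasi_from_steps[OF mk_grid(1,2)[OF assms(1,2)] rs cs] mk_grid(3)[OF assms(1,2)]
    by blast
qed




lemma all_leS: "(\<forall>i\<le>Suc n. P i) \<longleftrightarrow> P (Suc n) \<and> (\<forall>i\<le>n. P i)"
  by (auto simp: le_Suc_eq)
lemma all_le0: "(\<forall>i\<le>(0::nat). P i) \<longleftrightarrow> P 0"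
  by auto

abbreviation "t231 \<equiv> [[1,0],[1,1]] :: nat list list"
abbreviation "t312 \<equiv> [[1,1],[0,1]] :: nat list list"
abbreviation "t132 \<equiv> [[0,0],[0,1]] :: nat list list"
abbreviation "t213 \<equiv> [[1,0],[0,0]] :: nat list list"

lemma "dle t231 \<and> dloc t231" unfolding dle_def dloc_def by (simp only: list.size; simp add: all_leS all_le0 dof_def)



lemma mk_le:
  assumes "length s = length t" "\<forall>i\<le>length t. \<forall>j\<le>length t. dof s i j \<le> dof t i j"
  shows "conc_le n (mk n t) (mk n s)"
proof -
  have "dof s i j \<le> dof t i j" for i j
  proof (cases "i \<le> length t \<and> j \<le> length t")
    case True then show ?thesis using assms(2) by blast
  next
    case False then show ?thesis using dof_zero[of i j s] assms(1) by auto
  qed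
  then show ?thesis unfolding conc_le_def mk_def by auto
qed

lemmas fc = all_leS all_le0 dof_def dle_def dloc_def dstep_def

lemma part2: assumes n: "n \<ge> 3" shows "\<not> lattice_on (PP n) (conc_le n)"
proof
  assume L: "lattice_on (PP n) (conc_le n)"
  have ln: "length t231 < n" using n by simp
  have "dle t231 \<and> dloc t231" unfolding dle_def dloc_def by (simp only: list.size; simp add: fc)
  then have x: "mk n t231 \<in> PP n" using mk_PP[of t231 n] n by simp
  have "dle t312 \<and> dloc t312" unfolding dle_def dloc_def by (simp only: list.size; simp add: fc)
  then have y: "mk n t312 \<in> PP n" using mk_PP[of t312 n] n by simp
  have "dle t132 \<and> dloc t132" unfolding dle_def dloc_def by (simp only: list.size; simp add: fc)
  then have A: "mk n t132 \<in> PP n" using mk_PP[of t132 n] n by simp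
  have "dle t213 \<and> dloc t213" unfolding dle_def dloc_def by (simp only: list.size; simp add: fc)
  then have B: "mk n t213 \<in> PP n" using mk_PP[of t213 n] n by simp
  have xA: "conc_le n (mk n t231) (mk n t132)" by (rule mk_le) (simp only: list.size; simp add: fc)+
  have yA: "conc_le n (mk n t312) (mk n t132)" by (rule mk_le) (simp only: list.size; simp add: fc)+
  have xB: "conc_le n (mk n t231) (mk n t213)" by (rule mk_le) (simp only: list.size; simp add: fc)+
  have yB: "conc_le n (mk n t312) (mk n t213)" by (rule mk_le) (simp only: list.size; simp add: fc)+
  obtain z where z: "is_lub_in (PP n) (conc_le n) (mk n t231) (mk n t312) z"
    using L x y unfolding lattice_on_def by blast
  have zA: "conc_le n z (mk n t132)" and zB: "conc_le n z (mk n t213)"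
    and xz: "conc_le n (mk n t231) z" and yz: "conc_le n (mk n t312) z" and zP: "z \<in> PP n"
    using z A B xA yA xB yB unfolding is_lub_in_def by auto
  have "z 1 1 \<le> mk n t213 1 1" "z 2 2 \<le> mk n t132 2 2"
       "mk n t231 1 2 \<le> z 1 2" "mk n t312 2 1 \<le> z 2 1"
    using zA zB xz yz n unfolding conc_le_def by auto
  then have "z 1 1 \<le> 0" "z 2 2 \<le> 1" "1 \<le> z 1 2" "1 \<le> z 2 1"
    using n by (simp_all add: mk_def dof_def)
  moreover have "rect_ineq z 1 2 1 2" using zP n unfolding PP_def discrete_copula_def by auto
  ultimately show False unfolding rect_ineq_def by linarith
qed




abbreviation "tX \<equiv> [[1,1,0],[1,1,1],[0,0,1]] :: nat list list"
abbreviation "tY \<equiv> [[1,0,0],[1,1,1],[0,1,1]] :: nat list list"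
abbreviation "tA \<equiv> [[1,0,0],[1,1,0],[0,0,1]] :: nat list list"
abbreviation "tB \<equiv> [[1,0,0],[0,1,1],[0,0,1]] :: nat list list"
abbreviation "tM \<equiv> [[1,0,0],[1,1,1],[0,0,1]] :: nat list list"

lemma part3: assumes n: "n \<ge> 4" shows "\<not> lattice_on (QQ n - PP n) (conc_le n)"
proof
  assume L: "lattice_on (QQ n - PP n) (conc_le n)"
  have "dle tX \<and> dstep tX" unfolding dle_def dstep_def by (simp only: list.size; simp add: fc)
  then have xQ: "mk n tX \<in> QQ n" using mk_QQ[of tX n] n by simp
  have "dle tY \<and> dstep tY" unfolding dle_def dstep_def by (simp only: list.size; simp add: fc)
  then have yQ: "mk n tY \<in> QQ n" using mk_QQ[of tY n] n by simp
  have "dle tA \<and> dstep tA" unfolding dle_def dstep_def by (simp only: list.size; simp add: fc)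
  then have aQ: "mk n tA \<in> QQ n" using mk_QQ[of tA n] n by simp
  have "dle tB \<and> dstep tB" unfolding dle_def dstep_def by (simp only: list.size; simp add: fc)
  then have bQ: "mk n tB \<in> QQ n" using mk_QQ[of tB n] n by simp
  have "dle tM \<and> dloc tM" unfolding dle_def dloc_def by (simp only: list.size; simp add: fc)
  then have mP: "mk n tM \<in> PP n" using mk_PP[of tM n] n by simp
  have "\<not> rect_ineq (mk n tX) 1 2 2 3" using n by (simp add: rect_ineq_def mk_def dof_def)
  then have "mk n tX \<notin> PP n" using n unfolding PP_def discrete_copula_def by auto
  with xQ have x: "mk n tX \<in> QQ n - PP n" by simp
  have "\<not> rect_ineq (mk n tY) 2 3 1 2" using n by (simp add: rect_ineq_def mk_def dof_def)
  then have "mk n tY \<notin> PP n" using n unfolding PP_def discrete_copula_def by auto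
  with yQ have y: "mk n tY \<in> QQ n - PP n" by simp
  have "\<not> rect_ineq (mk n tA) 2 3 2 3" using n by (simp add: rect_ineq_def mk_def dof_def)
  then have "mk n tA \<notin> PP n" using n unfolding PP_def discrete_copula_def by auto
  with aQ have A: "mk n tA \<in> QQ n - PP n" by simp
  have "\<not> rect_ineq (mk n tB) 1 2 1 2" using n by (simp add: rect_ineq_def mk_def dof_def)
  then have "mk n tB \<notin> PP n" using n unfolding PP_def discrete_copula_def by auto
  with bQ have B: "mk n tB \<in> QQ n - PP n" by simp
  have xA: "conc_le n (mk n tX) (mk n tA)" by (rule mk_le) (simp only: list.size; simp add: fc)+
  have yA: "conc_le n (mk n tY) (mk n tA)" by (rule mk_le) (simp only: list.size; simp add: fc)+
  have xB: "conc_le n (mk n tX) (mk n tB)" by (rule mk_le) (simp only: list.size; simp add: fc)+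
  have yB: "conc_le n (mk n tY) (mk n tB)" by (rule mk_le) (simp only: list.size; simp add: fc)+
  obtain z where z: "is_lub_in (QQ n - PP n) (conc_le n) (mk n tX) (mk n tY) z"
    using L x y unfolding lattice_on_def by blast
  have zA: "conc_le n z (mk n tA)" and zB: "conc_le n z (mk n tB)"
    and xz: "conc_le n (mk n tX) z" and yz: "conc_le n (mk n tY) z" and zQ: "z \<in> QQ n - PP n"
    using z A B xA yA xB yB unfolding is_lub_in_def by auto
  have D0: "\<forall>i\<le>length tM. \<forall>j\<le>length tM. (dof tX i j = dof tM i j \<or> dof tY i j = dof tM i j) \<and>
     (dof tA i j = dof tM i j \<or> dof tB i j = dof tM i j)"
    by (simp only: list.size; simp add: fc)
  have D: "(dof tX i j = dof tM i j \<or> dof tY i j = dof tM i j) \<and>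
     (dof tA i j = dof tM i j \<or> dof tB i j = dof tM i j)" for i j
  proof (cases "i \<le> 3 \<and> j \<le> 3")
    case True then show ?thesis using D0 by simp
  next
    case False then show ?thesis using dof_zero[of i j] by auto
  qed
  have zM: "z i j = mk n tM i j" if "i \<le> n" "j \<le> n" for i j
  proof -
    have "mk n tX i j \<le> z i j" "mk n tY i j \<le> z i j" "z i j \<le> mk n tA i j" "z i j \<le> mk n tB i j"
      using zA zB xz yz that unfolding conc_le_def by auto
    moreover have "mk n tX i j = mk n tM i j \<or> mk n tY i j = mk n tM i j"
      "mk n tA i j = mk n tM i j \<or> mk n tB i j = mk n tM i j"
      using D[of i j] unfolding mk_def by auto
    ultimately show ?thesis by (smt (verit))
  qed
  have qz: "discrete_quasi_copula n z" "irreducible n z" using zQ unfolding QQ_def by auto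
  have rM: "rect_ineq (mk n tM) i i' j j'" if "i \<le> i'" "i' \<le> n" "j \<le> j'" "j' \<le> n" for i i' j j'
    using mP that unfolding PP_def discrete_copula_def by blast
  have "rect_ineq z i i' j j'" if "i \<le> i'" "i' \<le> n" "j \<le> j'" "j' \<le> n" for i i' j j'
    using rM[OF that] zM that unfolding rect_ineq_def by auto
  then have "z \<in> PP n" using qz unfolding PP_def discrete_copula_def discrete_quasi_copula_def by blast
  then show False using zQ by simp
qed


theorem theorem2:
  shows "(\<forall>n::nat. n \<ge> 1 \<longrightarrow> lattice_on (QQ n) (conc_le n))
       \<and> (\<forall>n::nat. n \<ge> 3 \<longrightarrow> \<not> lattice_on (PP n) (conc_le n))
       \<and> (\<forall>n::nat. n \<ge> 4 \<longrightarrow> \<not> lattice_on (QQ n - PP n) (conc_le n))"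
  using part1 part2 part3 by blast

end
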